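(* Let $(\mathcal{M},g)$ be a spacetime with a timelike Killing vector field $\vec K$, and let $(\bar x^0,\bar x^1,\bar x^2,\bar x^3)$ be Fermi-Walker-Killing coordinates, so that $\partial/\partial\bar x^0=\vec K$ and the metric components $\bar g_{\alpha\beta}$ do not depend on $\bar x^0$. Consider $N$ non-interacting particles, the $I$-th having spatial coordinates $\bar{\mathbf x}_I=(\bar x^1_I,\bar x^2_I,\bar x^3_I)$, spatial momentum coordinates $\bar{\mathbf p}_I=(\bar p_{I1},\bar p_{I2},\bar p_{I3})$ and proper time $\tau_I$, with one-particle Hamiltonian $H_I=\tfrac12\bar g^{\alpha\beta}\bar p_{I\alpha}\bar p_{I\beta}$, which is independent of $\bar x^0$ and is regarded as a smooth function of $(\bar{\mathbf x}_I,\bar{\mathbf p}_I)$. Assume each particle evolves by Hamilton's equations $d\bar x^j_I/d\tau_I=\partial H_I/\partial\bar p_{Ij}$, $d\bar p_{Ij}/d\tau_I=-\partial H_I/\partial \bar x^j_I$, and that $\tau_I=\tau_I(\bar x^0)$ is a smooth function of $\bar x^0$ alone. Then the vector field on the $6N$-dimensional phase space given by $$\vec v_H=\Big(\tfrac{d\bar{\mathbf x}_1}{d\bar x^0},\tfrac{d\bar{\mathbf p}_1}{d\bar x^0},\dots,\tfrac{d\bar{\mathbf x}_N}{d\bar x^0},\tfrac{d\bar{\mathbf p}_N}{d\bar x^0}\Big),\qquad \tfrac{d\bar{\mathbf x}_I}{d\bar x^0}=\tfrac{d\bar{\mathbf x}_I}{d\tau_I}\tfrac{d\tau_I}{d\bar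 x^0},\ \tfrac{d\bar{\mathbf p}_I}{d\bar x^0}=\tfrac{d\bar{\mathbf p}_I}{d\tau_I}\tfrac{d\tau_I}{d\bar x^0},$$ has zero divergence, and consequently the $N$-fold product of the 6-forms $d\bar x^1\wedge d\bar x^2\wedge d\bar x^3\wedge d\bar p_1\wedge d\bar p_2\wedge d\bar p_3$ (one for each particle) is invariant under the Hamiltonian flow parametrized by $\bar x^0$.
   Context: Fermi-Walker-Killing coordinates: given a timelike curve $\sigma$ whose four-velocity is the Killing field $\vec K$, and Fermi-Walker coordinates $X=(x^0,x^1,x^2,x^3)$ along $\sigma$ (built from a Fermi-Walker transported orthonormal tetrad with $e_0=\vec K$, via $x^0(\exp_{\sigma(\tau)}(\lambda^je_j(\tau)))=\tau$, $x^k(\exp_{\sigma(\tau)}(\lambda^je_j(\tau)))=\lambda^k$), and letting $\phi_s$ be the local flow of $\vec K$, the Fermi-Walker-Killing coordinates $\bar X$ are defined by $\bar X^{-1}(\bar x^0,\bar x^1,\bar x^2,\bar x^3)=\phi_{\bar x^0}(X^{-1}(0,\bar x^1,\bar x^2,\bar x^3))$. The momentum form coordinates in these coordinates are $\bar p_\alpha$. Sign conventions are those of Misner-Thorne-Wheeler. *)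

theory Defs
  imports "HOL-Analysis.Analysis"
begin

fun dderiv :: "'a::real_normed_vector list \<Rightarrow> ('a \<Rightarrow> 'b::real_normed_vector) \<Rightarrow> 'a \<Rightarrow> 'b" where
  "dderiv [] f = f"
| "dderiv (v # vs) f = (\<lambda>x. frechet_derivative (dderiv vs f) (at x) v)"

definition smooth_on :: "'a::real_normed_vector set \<Rightarrow> ('a \<Rightarrow> 'b::real_normed_vector) \<Rightarrow> bool" where
  "smooth_on S f \<longleftrightarrow> open S \<and> (\<forall>vs. dderiv vs f differentiable_on S)"

definition grad :: "('a::euclidean_space \<Rightarrow> real) \<Rightarrow> 'a \<Rightarrow> 'a" where
  "grad f z = (\<Sum>b\<in>Basis. frechet_derivative f (at z) b *\<^sub>R b)"

definition divergence :: "('a::euclidean_space \<Rightarrow> 'a) \<Rightarrow> 'a \<Rightarrow> real" where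
  "divergence F z = (\<Sum>b\<in>Basis. frechet_derivative F (at z) b \<bullet> b)"

text \<open>For a map L, the pullback of the standard volume form
  (the wedge product of all coordinate differentials) is det_lin L times that form.\<close>
definition det_lin :: "('a::euclidean_space \<Rightarrow> 'a) \<Rightarrow> real" where
  "det_lin L = (\<Sum>p | p permutes (Basis::'a set). of_int (sign p) * (\<Prod>b\<in>Basis. L (p b) \<bullet> b))"

text \<open>Phase space of N particles: for each particle I (index type 'n, N = CARD('n)) a pair
  (xbar_I, pbar_I) in R^3 x R^3.  The time-dependent vector field v_H(xbar0, z): for particle I,
  (dtau_I/dxbar0) * (dH_I/dp, - dH_I/dx) evaluated at (xbar_I, pbar_I).\<close>
definition hamiltonian_field ::
  "('n::finite \<Rightarrow> (real ^ 3) \<times> (real ^ 3) \<Rightarrow> real) \<Rightarrow> ('n \<Rightarrow> real \<Rightarrow> real) \<Rightarrow>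
     real \<Rightarrow> ((real ^ 3) \<times> (real ^ 3)) ^ 'n \<Rightarrow> ((real ^ 3) \<times> (real ^ 3)) ^ 'n" where
  "hamiltonian_field H tau t z =
     (\<chi> I. deriv (tau I) t *\<^sub>R (snd (grad (H I) (z $ I)), - fst (grad (H I) (z $ I))))"

end

theory Submission
  imports Defs
begin

lemma smooth_D:
  assumes "smooth_on S f" "x \<in> S"
  shows "(dderiv vs f has_derivative frechet_derivative (dderiv vs f) (at x)) (at x)"
proof -
  from assms have o: "open S" and d: "dderiv vs f differentiable_on S" by (auto simp: smooth_on_def)
  then have "dderiv vs f differentiable (at x)"
    using assms(2) by (simp add: differentiable_on_eq_differentiable_at)
  then show ?thesis by (simp add: frechet_derivative_works)
qed

lemma smooth_cont: "smooth_on S f \<Longrightarrow> continuous_on S (dderiv vs f)"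
  by (simp add: smooth_on_def differentiable_imp_continuous_on)

lemma line_deriv:
  assumes "(f has_derivative D) (at (y + r *\<^sub>R u))"
  shows "((\<lambda>r. f (y + r *\<^sub>R u)) has_derivative (\<lambda>h. h *\<^sub>R D u)) (at r within X)"
proof -
  have l: "linear D" using assms has_derivative_linear by blast
  have "((\<lambda>r. y + r *\<^sub>R u) has_derivative (\<lambda>h. h *\<^sub>R u)) (at r within X)"
    by (auto intro!: derivative_eq_intros)
  from has_derivative_compose[OF this has_derivative_at_withinI[OF assms]]
  show ?thesis using linear_cmul[OF l] by (simp add: o_def)
qed

lemma square_mvt:
  fixes f :: "'a::real_normed_vector \<Rightarrow> real"
  assumes s: "s > 0"
  and sq: "\<And>a b. a \<in> {0..s} \<Longrightarrow> b \<in> {0..s} \<Longrightarrow> x + a *\<^sub>R v + b *\<^sub>R w \<in> S"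
  and Df: "\<And>y. y\<in>S \<Longrightarrow> (f has_derivative Df y) (at y)"
  and Av: "\<And>y. y\<in>S \<Longrightarrow> ((\<lambda>y. Df y v) has_derivative Av y) (at y)"
  shows "\<exists>a\<in>{0..s}. \<exists>b\<in>{0..s}. f (x + s *\<^sub>R v + s *\<^sub>R w) - f (x + s *\<^sub>R v) - f (x + s *\<^sub>R w) + f x
           = s * s * Av (x + a *\<^sub>R v + b *\<^sub>R w) w"
proof -
  define \<phi> where "\<phi> r = f (x + r *\<^sub>R v + s *\<^sub>R w) - f (x + r *\<^sub>R v)" for r
  have "\<exists>r\<in>{0..s}. \<phi> s - \<phi> 0 = (\<lambda>h. h * (Df (x + r *\<^sub>R v + s *\<^sub>R w) v - Df (x + r *\<^sub>R v) v)) (s - 0)"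
  proof (rule mvt_very_simple)
    fix r assume r: "0 \<le> r" "r \<le> s"
    have 1: "((\<lambda>r. f ((x + s *\<^sub>R w) + r *\<^sub>R v)) has_derivative (\<lambda>h. h *\<^sub>R Df (x + r *\<^sub>R v + s *\<^sub>R w) v)) (at r within {0..s})"
      by (rule line_deriv) (use Df sq r s in \<open>auto simp: algebra_simps\<close>)
    have 2: "((\<lambda>r. f (x + r *\<^sub>R v)) has_derivative (\<lambda>h. h *\<^sub>R Df (x + r *\<^sub>R v) v)) (at r within {0..s})"
      by (rule line_deriv) (use Df sq[of r 0] r s in auto)
    show "(\<phi> has_derivative (\<lambda>h. h * (Df (x + r *\<^sub>R v + s *\<^sub>R w) v - Df (x + r *\<^sub>R v) v))) (at r within {0..s})"
      unfolding \<phi>_def using has_derivative_diff[OF 1 2]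
      by (simp add: algebra_simps)
  qed (use s in auto)
  then obtain a where a: "a \<in> {0..s}" and e1: "\<phi> s - \<phi> 0 = s * (Df (x + a *\<^sub>R v + s *\<^sub>R w) v - Df (x + a *\<^sub>R v) v)"
    by auto
  have "\<exists>b\<in>{0..s}. (\<lambda>q. Df (x + a *\<^sub>R v + q *\<^sub>R w) v) s - (\<lambda>q. Df (x + a *\<^sub>R v + q *\<^sub>R w) v) 0
        = (\<lambda>h. h * Av (x + a *\<^sub>R v + b *\<^sub>R w) w) (s - 0)"
  proof (rule mvt_very_simple)
    fix q assume q: "0 \<le> q" "q \<le> s"
    show "((\<lambda>q. Df (x + a *\<^sub>R v + q *\<^sub>R w) v) has_derivative (\<lambda>h. h * Av (x + a *\<^sub>R v + q *\<^sub>R w) w)) (at q within {0..s})"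
      using line_deriv[of "\<lambda>y. Df y v" "Av (x + a *\<^sub>R v + q *\<^sub>R w)" "x + a *\<^sub>R v" q w "{0..s}"]
        Av sq a q by auto
  qed (use s in auto)
  then obtain b where b: "b \<in> {0..s}" and e2:
    "Df (x + a *\<^sub>R v + s *\<^sub>R w) v - Df (x + a *\<^sub>R v) v = s * Av (x + a *\<^sub>R v + b *\<^sub>R w) w"
    by auto
  show ?thesis
    using e1 e2 a b unfolding \<phi>_def by (intro bexI[of _ a] bexI[of _ b]) (auto simp: algebra_simps)
qed

lemma sym_real:
  fixes f :: "'a::real_normed_vector \<Rightarrow> real"
  assumes S: "open S" "x \<in> S"
  and Df: "\<And>y. y\<in>S \<Longrightarrow> (f has_derivative Df y) (at y)"
  and Av: "\<And>y. y\<in>S \<Longrightarrow> ((\<lambda>y. Df y v) has_derivative Av y) (at y)"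
  and Aw: "\<And>y. y\<in>S \<Longrightarrow> ((\<lambda>y. Df y w) has_derivative Aw y) (at y)"
  and cv: "continuous_on S (\<lambda>y. Av y w)" and cw: "continuous_on S (\<lambda>y. Aw y v)"
  shows "Av x w = Aw x v"
proof (rule ccontr)
  assume ne: "Av x w \<noteq> Aw x v"
  define d where "d = \<bar>Av x w - Aw x v\<bar> / 2"
  have d: "d > 0" using ne by (simp add: d_def)
  obtain e0 where e0: "e0 > 0" "ball x e0 \<subseteq> S" using S open_contains_ball by blast
  obtain e1 where e1: "e1 > 0" "\<And>y. y \<in> S \<Longrightarrow> dist y x < e1 \<Longrightarrow> dist (Av y w) (Av x w) < d"
    using cv S d unfolding continuous_on_eq_continuous_within continuous_within_eps_delta by metis
  obtain e2 where e2: "e2 > 0" "\<And>y. y \<in> S \<Longrightarrow> dist y x < e2 \<Longrightarrow> dist (Aw y v) (Aw x v) < d"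
    using cw S d unfolding continuous_on_eq_continuous_within continuous_within_eps_delta by metis
  define e where "e = min e0 (min e1 e2)"
  have e: "e > 0" using e0 e1 e2 by (simp add: e_def)
  define s where "s = e / (2 * (norm v + norm w + 1))"
  have s: "s > 0" using e unfolding s_def by (intro divide_pos_pos) (auto intro: add_nonneg_pos)
  have close: "dist (x + a *\<^sub>R v + b *\<^sub>R w) x < e" if "a \<in> {0..s}" "b \<in> {0..s}" for a b
  proof -
    have "dist (x + a *\<^sub>R v + b *\<^sub>R w) x = norm (a *\<^sub>R v + b *\<^sub>R w)"
      by (simp add: dist_norm)
    also have "\<dots> \<le> a * norm v + b * norm w"
      using that by (metis (no_types, lifting) abs_of_nonneg atLeastAtMost_iff norm_scaleR norm_triangle_ineq)
    also have "\<dots> \<le> s * norm v + s * norm w"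
      using that by (intro add_mono mult_right_mono) auto
    also have "\<dots> < e"
    proof -
      have "s * norm v + s * norm w = e * (norm v + norm w) / (2 * (norm v + norm w + 1))"
        by (simp add: s_def add_divide_distrib algebra_simps)
      also have "\<dots> < e"
      proof -
        have D: "0 < 2 * (norm v + norm w + 1)" by (simp add: add_nonneg_pos)
        have "e * (norm v + norm w) < e * (2 * (norm v + norm w + 1))"
          using e by (intro mult_strict_left_mono) (auto simp: add_nonneg_pos add.assoc[symmetric])
        then show ?thesis using D by (simp add: divide_less_eq)
      qed
      finally show ?thesis .
    qed
    finally show ?thesis .
  qed
  have inS: "x + a *\<^sub>R v + b *\<^sub>R w \<in> S" if "a \<in> {0..s}" "b \<in> {0..s}" for a b
    using close[OF that] e0 by (auto simp: e_def dist_commute)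
  have inS': "x + a *\<^sub>R w + b *\<^sub>R v \<in> S" if "a \<in> {0..s}" "b \<in> {0..s}" for a b
    using inS[OF that(2,1)] by (simp add: algebra_simps)
  obtain a b where ab: "a \<in> {0..s}" "b \<in> {0..s}" and E1:
    "f (x + s *\<^sub>R v + s *\<^sub>R w) - f (x + s *\<^sub>R v) - f (x + s *\<^sub>R w) + f x = s * s * Av (x + a *\<^sub>R v + b *\<^sub>R w) w"
    using square_mvt[OF s inS Df Av] by blast
  obtain a' b' where ab': "a' \<in> {0..s}" "b' \<in> {0..s}" and E2:
    "f (x + s *\<^sub>R w + s *\<^sub>R v) - f (x + s *\<^sub>R w) - f (x + s *\<^sub>R v) + f x = s * s * Aw (x + a' *\<^sub>R w + b' *\<^sub>R v) v"
    using square_mvt[OF s inS' Df Aw] by blast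
  have "x + s *\<^sub>R w + s *\<^sub>R v = x + s *\<^sub>R v + s *\<^sub>R w" by (simp add: algebra_simps)
  with E1 E2 have "s * s * Av (x + a *\<^sub>R v + b *\<^sub>R w) w = s * s * Aw (x + a' *\<^sub>R w + b' *\<^sub>R v) v"
    by (metis (no_types) add_diff_cancel_left diff_add_cancel diff_diff_eq)
  with s have eq: "Av (x + a *\<^sub>R v + b *\<^sub>R w) w = Aw (x + a' *\<^sub>R w + b' *\<^sub>R v) v" by simp
  have "dist (Av (x + a *\<^sub>R v + b *\<^sub>R w) w) (Av x w) < d"
    using e1(2)[OF inS[OF ab]] close[OF ab] by (simp add: e_def)
  moreover have "dist (Aw (x + a' *\<^sub>R w + b' *\<^sub>R v) v) (Aw x v) < d"
    using e2(2)[OF inS'[OF ab']] close[OF ab'(2,1)] by (simp add: e_def algebra_simps)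
  moreover have "\<And>p q a0 b0 :: real. \<bar>p - a0\<bar> < \<bar>a0 - b0\<bar> / 2 \<Longrightarrow> \<bar>q - b0\<bar> < \<bar>a0 - b0\<bar> / 2 \<Longrightarrow> p = q \<Longrightarrow> False"
    by (simp add: abs_if split: if_split_asm)
  ultimately show False using eq unfolding d_def dist_real_def by blast
qed

lemma inner_deriv:
  assumes "(g has_derivative G) F"
  shows "((\<lambda>y. g y \<bullet> b) has_derivative (\<lambda>h. G h \<bullet> b)) F"
  using bounded_linear.has_derivative[OF bounded_linear_inner_left assms] .

lemma sym_smooth:
  fixes f :: "'a::real_normed_vector \<Rightarrow> 'b::real_inner"
  assumes sm: "smooth_on S f" and x: "x \<in> S"
  shows "dderiv [w, v] f x = dderiv [v, w] f x"
proof -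
  have S: "open S" using sm by (simp add: smooth_on_def)
  have comp: "dderiv [w, v] f x \<bullet> b = dderiv [v, w] f x \<bullet> b" for b
  proof -
    have D0: "(f has_derivative frechet_derivative f (at y)) (at y)" if "y \<in> S" for y
      using smooth_D[OF sm that, of "[]"] by simp
    have "(\<lambda>h. frechet_derivative (dderiv [v] f) (at x) h \<bullet> b) w = (\<lambda>h. frechet_derivative (dderiv [w] f) (at x) h \<bullet> b) v"
    proof (rule sym_real[OF S x, where f="\<lambda>y. f y \<bullet> b" and Df="\<lambda>y h. frechet_derivative f (at y) h \<bullet> b"])
      fix y assume y: "y \<in> S"
      show "((\<lambda>y. f y \<bullet> b) has_derivative (\<lambda>h. frechet_derivative f (at y) h \<bullet> b)) (at y)"
        by (rule inner_deriv[OF D0[OF y]])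
      show "((\<lambda>y. frechet_derivative f (at y) v \<bullet> b) has_derivative (\<lambda>h. frechet_derivative (dderiv [v] f) (at y) h \<bullet> b)) (at y)"
        using inner_deriv[OF smooth_D[OF sm y, of "[v]"], of b] by simp
      show "((\<lambda>y. frechet_derivative f (at y) w \<bullet> b) has_derivative (\<lambda>h. frechet_derivative (dderiv [w] f) (at y) h \<bullet> b)) (at y)"
        using inner_deriv[OF smooth_D[OF sm y, of "[w]"], of b] by simp
    next
      show "continuous_on S (\<lambda>y. frechet_derivative (dderiv [v] f) (at y) w \<bullet> b)"
        using continuous_on_inner[OF smooth_cont[OF sm, of "[w,v]"] continuous_on_const, of b] by simp
      show "continuous_on S (\<lambda>y. frechet_derivative (dderiv [w] f) (at y) v \<bullet> b)"
        using continuous_on_inner[OF smooth_cont[OF sm, of "[v,w]"] continuous_on_const, of b] by simp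
    qed
    then show ?thesis by simp
  qed
  have "(dderiv [w, v] f x - dderiv [v, w] f x) \<bullet> (dderiv [w, v] f x - dderiv [v, w] f x) = 0"
    using comp by (simp add: inner_diff_left)
  then show ?thesis by simp
qed


lemma sum_Basis_prod_real:
  fixes g :: "('a::euclidean_space \<times> 'b::euclidean_space) \<Rightarrow> real"
  shows "sum g Basis = (\<Sum>i\<in>Basis. g (i, 0)) + (\<Sum>i\<in>Basis. g (0, i))"
proof -
  have "inj_on (\<lambda>u. (u::'a, 0::'b)) Basis" "inj_on (\<lambda>u. (0::'a, u::'b)) Basis"
    by (auto intro!: inj_onI Pair_inject)
  thus ?thesis
    unfolding Basis_prod_def
    by (subst sum.union_disjoint) (auto simp: Basis_prod_def sum.reindex)
qed

lemma sum_Basis_vec_real: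
  fixes g :: "'a::euclidean_space ^ 'n::finite \<Rightarrow> real"
  shows "sum g Basis = (\<Sum>J\<in>UNIV. \<Sum>u\<in>Basis. g (axis J u))"
proof -
  have B: "(Basis :: ('a^'n) set) = (\<lambda>(J,u). axis J u) ` (UNIV \<times> Basis)"
    unfolding Basis_vec_def by auto
  have inj: "inj_on (\<lambda>(J,u). axis J u :: 'a^'n) (UNIV \<times> Basis)"
    by (auto intro!: inj_onI simp: axis_eq_axis nonzero_Basis)
  show ?thesis
    unfolding B sum.reindex[OF inj] by (simp add: sum.cartesian_product prod.case_distrib)
qed

lemma grad_deriv:
  fixes h :: "'a::euclidean_space \<Rightarrow> real"
  assumes sm: "smooth_on UNIV h"
  shows "(grad h has_derivative (\<lambda>u. \<Sum>e\<in>Basis. dderiv [u, e] h w *\<^sub>R e)) (at w)"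
proof -
  have g: "grad h = (\<lambda>y. \<Sum>e\<in>Basis. dderiv [e] h y *\<^sub>R e)"
    by (simp add: grad_def fun_eq_iff)
  have "((\<lambda>y. \<Sum>e\<in>Basis. dderiv [e] h y *\<^sub>R e) has_derivative
          (\<lambda>u. \<Sum>e\<in>Basis. frechet_derivative (dderiv [e] h) (at w) u *\<^sub>R e)) (at w)"
    by (intro has_derivative_sum has_derivative_scaleR_left smooth_D[OF sm]) auto
  then show ?thesis unfolding g by simp
qed

definition DG :: "('a::euclidean_space \<times> 'a \<Rightarrow> real) \<Rightarrow> 'a \<times> 'a \<Rightarrow> 'a \<times> 'a \<Rightarrow> 'a \<times> 'a" where
  "DG h w u = (snd (\<Sum>e\<in>Basis. dderiv [u, e] h w *\<^sub>R e), - fst (\<Sum>e\<in>Basis. dderiv [u, e] h w *\<^sub>R e))"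

lemma G_deriv:
  fixes h :: "'a::euclidean_space \<times> 'a \<Rightarrow> real"
  assumes sm: "smooth_on UNIV h"
  shows "((\<lambda>w. (snd (grad h w), - fst (grad h w))) has_derivative DG h w) (at w)"
  unfolding DG_def
  by (intro has_derivative_Pair has_derivative_minus has_derivative_snd has_derivative_fst grad_deriv[OF sm])

lemma Dg_inner:
  fixes h :: "'a::euclidean_space \<Rightarrow> real"
  assumes "e' \<in> Basis"
  shows "(\<Sum>e\<in>Basis. dderiv [u, e] h w *\<^sub>R e) \<bullet> e' = dderiv [u, e'] h w"
  using assms by (simp add: inner_sum_left inner_Basis if_distrib cong: if_cong)

lemma DG_trace:
  fixes h :: "'a::euclidean_space \<times> 'a \<Rightarrow> real"
  assumes sm: "smooth_on UNIV h"
  shows "(\<Sum>u\<in>Basis. DG h w u \<bullet> u) = 0"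
proof -
  have 1: "DG h w (b, 0) \<bullet> (b, 0) = dderiv [(b, 0), (0, b)] h w" if "b \<in> Basis" for b
  proof -
    have "DG h w (b, 0) \<bullet> (b, 0) = (\<Sum>e\<in>Basis. dderiv [(b,0), e] h w *\<^sub>R e) \<bullet> (0, b)"
      by (simp add: DG_def inner_Pair_0)
    also have "\<dots> = dderiv [(b, 0), (0, b)] h w"
      by (rule Dg_inner) (use that in \<open>auto simp: Basis_prod_def\<close>)
    finally show ?thesis .
  qed
  have 2: "DG h w (0, b) \<bullet> (0, b) = - dderiv [(0, b), (b, 0)] h w" if "b \<in> Basis" for b
  proof -
    have "DG h w (0, b) \<bullet> (0, b) = - ((\<Sum>e\<in>Basis. dderiv [(0,b), e] h w *\<^sub>R e) \<bullet> (b, 0))"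
      by (simp add: DG_def inner_Pair_0)
    also have "(\<Sum>e\<in>Basis. dderiv [(0,b), e] h w *\<^sub>R e) \<bullet> (b, 0) = dderiv [(0, b), (b, 0)] h w"
      by (rule Dg_inner) (use that in \<open>auto simp: Basis_prod_def\<close>)
    finally show ?thesis .
  qed
  have 3: "dderiv [(0, b), (b, 0)] h w = dderiv [(b, 0), (0, b)] h w" for b
    by (rule sym_smooth[OF sm]) simp
  show ?thesis
    unfolding sum_Basis_prod_real using 1 2 3
    by (simp add: sum.distrib[symmetric])
qed

lemma vec_deriv:
  fixes f :: "'a::real_normed_vector \<Rightarrow> 'b::euclidean_space ^ 'n::finite"
  assumes "\<And>J. ((\<lambda>x. f x $ J) has_derivative (\<lambda>k. f' k $ J)) (at z)"
  shows "(f has_derivative f') (at z)"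
proof (subst has_derivative_componentwise_within, intro ballI)
  fix i :: "'b^'n" assume "i \<in> Basis"
  then obtain J u where i: "i = axis J u" "u \<in> Basis" unfolding Basis_vec_def by auto
  show "((\<lambda>x. f x \<bullet> i) has_derivative (\<lambda>x. f' x \<bullet> i)) (at z)"
    unfolding i inner_axis using inner_deriv[OF assms[of J]] .
qed

lemma divergence_zero:
  fixes H :: "'n::finite \<Rightarrow> (real ^ 3) \<times> (real ^ 3) \<Rightarrow> real"
  assumes H_smooth: "\<And>I. smooth_on UNIV (H I)"
  shows "divergence (hamiltonian_field H tau t) z = 0"
proof -
  define F' where "F' = (\<lambda>k. \<chi> I. deriv (tau I) t *\<^sub>R DG (H I) (z $ I) (k $ I))"
  have D: "(hamiltonian_field H tau t has_derivative F') (at z)"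
  proof (rule vec_deriv)
    fix J
    have nth: "((\<lambda>x. x $ J) has_derivative (\<lambda>k. k $ J)) (at z)"
      by (simp add: bounded_linear_imp_has_derivative bounded_linear_vec_nth)
    have "((\<lambda>x. (\<lambda>w. (snd (grad (H J) w), - fst (grad (H J) w))) (x $ J)) has_derivative
             (\<lambda>k. DG (H J) (z $ J) (k $ J))) (at z)"
      using has_derivative_compose[OF nth G_deriv[OF H_smooth]] by (simp add: o_def)
    from has_derivative_scaleR_right[OF this, of "deriv (tau J) t"]
    show "((\<lambda>x. hamiltonian_field H tau t x $ J) has_derivative (\<lambda>k. F' k $ J)) (at z)"
      unfolding hamiltonian_field_def F'_def by simp
  qed
  have "divergence (hamiltonian_field H tau t) z = (\<Sum>b\<in>Basis. F' b \<bullet> b)"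
    unfolding divergence_def frechet_derivative_at[OF D] ..
  also have "\<dots> = (\<Sum>J\<in>UNIV. deriv (tau J) t * (\<Sum>u\<in>Basis. DG (H J) (z $ J) u \<bullet> u))"
    unfolding sum_Basis_vec_real by (simp add: F'_def inner_axis sum_distrib_left)
  also have "\<dots> = 0" by (simp add: DG_trace[OF H_smooth])
  finally show ?thesis .
qed

lemma ham_differentiable:
  fixes H :: "'n::finite \<Rightarrow> (real ^ 3) \<times> (real ^ 3) \<Rightarrow> real"
  assumes H_smooth: "\<And>I. smooth_on UNIV (H I)"
  shows "hamiltonian_field H tau t differentiable (at z)"
proof -
  define F' where "F' = (\<lambda>k. \<chi> I. deriv (tau I) t *\<^sub>R DG (H I) (z $ I) (k $ I))"
  have D: "(hamiltonian_field H tau t has_derivative F') (at z)"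
  proof (rule vec_deriv)
    fix J
    have nth: "((\<lambda>x. x $ J) has_derivative (\<lambda>k. k $ J)) (at z)"
      by (simp add: bounded_linear_imp_has_derivative bounded_linear_vec_nth)
    have "((\<lambda>x. (\<lambda>w. (snd (grad (H J) w), - fst (grad (H J) w))) (x $ J)) has_derivative
             (\<lambda>k. DG (H J) (z $ J) (k $ J))) (at z)"
      using has_derivative_compose[OF nth G_deriv[OF H_smooth]] by (simp add: o_def)
    from has_derivative_scaleR_right[OF this, of "deriv (tau J) t"]
    show "((\<lambda>x. hamiltonian_field H tau t x $ J) has_derivative (\<lambda>k. F' k $ J)) (at z)"
      unfolding hamiltonian_field_def F'_def by simp
  qed
  then show ?thesis by (rule differentiableI)
qed


lemma alt_zero:
  fixes L :: "'a::euclidean_space \<Rightarrow> 'a"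
  assumes c: "c \<in> Basis" and d: "d \<in> Basis" and cd: "c \<noteq> d"
  shows "(\<Sum>p | p permutes (Basis::'a set). of_int (sign p) *
            (\<Prod>b\<in>Basis. L (p b) \<bullet> (if b = c then d else b))) = (0::real)"
proof -
  define P where "P = {p. p permutes (Basis::'a set)}"
  define \<tau> where "\<tau> = Transposition.transpose c d"
  define \<sigma> where "\<sigma> = (\<lambda>b::'a. if b = c then d else b)"
  define g where "g p = of_int (sign p) * (\<Prod>b\<in>Basis. L (p b) \<bullet> \<sigma> b)" for p
  have \<tau>: "\<tau> permutes Basis" unfolding \<tau>_def using c d by (rule permutes_swap_id)
  have \<sigma>\<tau>: "\<sigma> (\<tau> b) = \<sigma> b" for b
    using cd by (auto simp: \<sigma>_def \<tau>_def Transposition.transpose_def)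
  have neg: "g (p \<circ> \<tau>) = - g p" if p: "p \<in> P" for p
  proof -
    have pp: "permutation p" using p by (auto simp: P_def intro: permutes_imp_permutation[OF finite_Basis])
    have tp: "permutation \<tau>" using \<tau> by (auto intro: permutes_imp_permutation[OF finite_Basis])
    have s: "sign (p \<circ> \<tau>) = - sign p"
      using sign_compose[OF pp tp] cd by (simp add: \<tau>_def sign_swap_id)
    have "(\<Prod>b\<in>Basis. L ((p \<circ> \<tau>) b) \<bullet> \<sigma> b) = (\<Prod>b\<in>Basis. (\<lambda>x. L (p x) \<bullet> \<sigma> (\<tau> x)) (\<tau> b))"
      using \<sigma>\<tau> by (simp add: \<tau>_def)
    also have "\<dots> = (\<Prod>b\<in>Basis. L (p b) \<bullet> \<sigma> (\<tau> b))"
      using prod.permute[OF \<tau>, of "\<lambda>x. L (p x) \<bullet> \<sigma> (\<tau> x)"] by (simp add: o_def)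
    also have "\<dots> = (\<Prod>b\<in>Basis. L (p b) \<bullet> \<sigma> b)" using \<sigma>\<tau> by simp
    finally show ?thesis unfolding g_def s by simp
  qed
  have bij: "bij_betw (\<lambda>p. p \<circ> \<tau>) P P"
  proof (rule bij_betw_byWitness[where f'="\<lambda>p. p \<circ> \<tau>"])
    show "\<forall>a\<in>P. a \<circ> \<tau> \<circ> \<tau> = a" by (simp add: \<tau>_def o_assoc[symmetric])
    show "\<forall>a\<in>P. a \<circ> \<tau> \<circ> \<tau> = a" by (simp add: \<tau>_def o_assoc[symmetric])
    show "(\<lambda>p. p \<circ> \<tau>) ` P \<subseteq> P" using \<tau> by (auto simp: P_def intro: permutes_compose)
    show "(\<lambda>p. p \<circ> \<tau>) ` P \<subseteq> P" using \<tau> by (auto simp: P_def intro: permutes_compose)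
  qed
  have "sum g P = sum (g \<circ> (\<lambda>p. p \<circ> \<tau>)) P"
    using sum.reindex_bij_betw[OF bij, of g] by (simp add: o_def)
  also have "\<dots> = - sum g P" using neg by (simp add: sum_negf[symmetric])
  finally have "sum g P = 0" by simp
  then show ?thesis unfolding g_def P_def \<sigma>_def by simp
qed

lemma det_lin_id: "det_lin (\<lambda>x::'a::euclidean_space. x) = 1"
proof -
  define P where "P = {p. p permutes (Basis::'a set)}"
  have fin: "finite P" unfolding P_def by (rule finite_permutations) simp
  have idP: "id \<in> P" by (simp add: P_def permutes_id)
  have z: "of_int (sign p) * (\<Prod>b\<in>Basis. p b \<bullet> b) = (0::real)" if "p \<in> P - {id}" for p
  proof -
    from that have pp: "p permutes Basis" "p \<noteq> id" by (auto simp: P_def)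
    then obtain b where b: "p b \<noteq> b" by (metis eq_id_iff)
    then have bB: "b \<in> Basis" using pp(1) by (meson permutes_not_in)
    have "p b \<in> Basis" using pp(1) bB by (simp add: permutes_in_image)
    then have "p b \<bullet> b = 0" using bB b inner_not_same_Basis by blast
    then have "(\<Prod>b\<in>Basis. p b \<bullet> b) = 0" using bB by (intro prod_zero) auto
    then show ?thesis by simp
  qed
  have "det_lin (\<lambda>x::'a. x) = (\<Sum>p\<in>P. of_int (sign p) * (\<Prod>b\<in>Basis. p b \<bullet> b))"
    by (simp add: det_lin_def P_def)
  also have "\<dots> = of_int (sign (id::'a\<Rightarrow>'a)) * (\<Prod>b\<in>Basis. id b \<bullet> (b::'a))"
  proof -
    have "(\<Sum>p\<in>P-{id}. of_int (sign p) * (\<Prod>b\<in>Basis. p b \<bullet> b)) = (0::real)"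
      using z by (intro sum.neutral) blast
    then show ?thesis
      using sum.remove[OF fin idP, of "\<lambda>p. of_int (sign p) * (\<Prod>b\<in>Basis. p b \<bullet> (b::'a))"] by simp
  qed
  also have "\<dots> = 1" by simp
  finally show ?thesis .
qed

lemma jacobi:
  fixes L M :: "'a::euclidean_space \<Rightarrow> 'a"
  assumes M: "linear M"
  shows "(\<Sum>p | p permutes (Basis::'a set). of_int (sign p) *
            (\<Sum>c\<in>Basis. (M (L (p c)) \<bullet> c) * (\<Prod>b\<in>Basis-{c}. L (p b) \<bullet> b)))
       = (\<Sum>c\<in>Basis. M c \<bullet> c) * det_lin L"
proof -
  define P where "P = {p. p permutes (Basis::'a set)}"
  define Q where "Q c d = (\<Sum>p\<in>P. of_int (sign p) * (\<Prod>b\<in>Basis. L (p b) \<bullet> (if b = c then d else b)))" for c d :: 'a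
  have expand: "M x \<bullet> c = (\<Sum>d\<in>Basis. (M d \<bullet> c) * (x \<bullet> d))" for x c
  proof -
    have "M x = M (\<Sum>d\<in>Basis. (x \<bullet> d) *\<^sub>R d)" by (simp add: euclidean_representation)
    also have "\<dots> = (\<Sum>d\<in>Basis. (x \<bullet> d) *\<^sub>R M d)" by (simp add: linear_sum[OF M] linear_cmul[OF M])
    finally show ?thesis by (simp add: inner_sum_left mult.commute)
  qed
  have expand': "(M (L (p c)) \<bullet> c) * r = (\<Sum>d\<in>Basis. (M d \<bullet> c) * ((L (p c) \<bullet> d) * r))" for p c r
    using expand[of "L (p c)" c] by (simp add: sum_distrib_right sum_distrib_left mult_ac)
  have split: "(L (p c) \<bullet> d) * (\<Prod>b\<in>Basis-{c}. L (p b) \<bullet> b) = (\<Prod>b\<in>Basis. L (p b) \<bullet> (if b = c then d else b))"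
    if "c \<in> Basis" for p c d
  proof -
    have "(\<Prod>b\<in>Basis. L (p b) \<bullet> (if b = c then d else b)) = (L (p c) \<bullet> d) * (\<Prod>b\<in>Basis-{c}. L (p b) \<bullet> (if b = c then d else b))"
      by (subst prod.remove[OF finite_Basis that]) simp
    also have "(\<Prod>b\<in>Basis-{c}. L (p b) \<bullet> (if b = c then d else b)) = (\<Prod>b\<in>Basis-{c}. L (p b) \<bullet> b)"
      by (rule prod.cong) auto
    finally show ?thesis by simp
  qed
  have "(\<Sum>p\<in>P. of_int (sign p) * (\<Sum>c\<in>Basis. (M (L (p c)) \<bullet> c) * (\<Prod>b\<in>Basis-{c}. L (p b) \<bullet> b)))
      = (\<Sum>p\<in>P. \<Sum>c\<in>Basis. \<Sum>d\<in>Basis. (M d \<bullet> c) * (of_int (sign p) * (\<Prod>b\<in>Basis. L (p b) \<bullet> (if b = c then d else b))))"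
  proof (rule sum.cong[OF refl])
    fix p
    have "of_int (sign p) * (\<Sum>c\<in>Basis. (M (L (p c)) \<bullet> c) * (\<Prod>b\<in>Basis-{c}. L (p b) \<bullet> b))
        = (\<Sum>c\<in>Basis. \<Sum>d\<in>Basis. (M d \<bullet> c) * (of_int (sign p) * ((L (p c) \<bullet> d) * (\<Prod>b\<in>Basis-{c}. L (p b) \<bullet> b))))"
      unfolding expand' by (simp add: sum_distrib_left mult_ac)
    also have "\<dots> = (\<Sum>c\<in>Basis. \<Sum>d\<in>Basis. (M d \<bullet> c) * (of_int (sign p) * (\<Prod>b\<in>Basis. L (p b) \<bullet> (if b = c then d else b))))"
      by (intro sum.cong refl) (simp add: split)
    finally show "of_int (sign p) * (\<Sum>c\<in>Basis. (M (L (p c)) \<bullet> c) * (\<Prod>b\<in>Basis-{c}. L (p b) \<bullet> b))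
        = (\<Sum>c\<in>Basis. \<Sum>d\<in>Basis. (M d \<bullet> c) * (of_int (sign p) * (\<Prod>b\<in>Basis. L (p b) \<bullet> (if b = c then d else b))))" .
  qed
  also have "\<dots> = (\<Sum>c\<in>Basis. \<Sum>d\<in>Basis. (M d \<bullet> c) * Q c d)"
    unfolding Q_def sum_distrib_left
    by (subst sum.swap) (simp add: sum.swap[of _ P])
  also have "\<dots> = (\<Sum>c\<in>Basis. (M c \<bullet> c) * det_lin L)"
  proof (rule sum.cong[OF refl])
    fix c :: 'a assume c: "c \<in> Basis"
    have "(\<Sum>d\<in>Basis. (M d \<bullet> c) * Q c d) = (M c \<bullet> c) * Q c c + (\<Sum>d\<in>Basis-{c}. (M d \<bullet> c) * Q c d)"
      using sum.remove[OF finite_Basis c] by simp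
    also have "(\<Sum>d\<in>Basis-{c}. (M d \<bullet> c) * Q c d) = 0"
    proof (rule sum.neutral, intro ballI)
      fix d assume d: "d \<in> Basis - {c}"
      have "Q c d = 0" unfolding Q_def P_def
        by (rule alt_zero) (use c d in auto)
      then show "(M d \<bullet> c) * Q c d = 0" by simp
    qed
    also have "Q c c = det_lin L" by (simp add: Q_def P_def det_lin_def)
    finally show "(\<Sum>d\<in>Basis. (M d \<bullet> c) * Q c d) = (M c \<bullet> c) * det_lin L" by simp
  qed
  also have "\<dots> = (\<Sum>c\<in>Basis. M c \<bullet> c) * det_lin L" by (simp add: sum_distrib_right)
  finally show ?thesis by (simp add: P_def)
qed


lemma det_lin_deriv:
  fixes L :: "real \<Rightarrow> 'a::euclidean_space \<Rightarrow> 'a"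
  assumes M: "linear M"
  and e: "\<And>a b. ((\<lambda>s. L s a \<bullet> b) has_derivative (\<lambda>h. h * (M (L t a) \<bullet> b))) (at t within X)"
  shows "((\<lambda>s. det_lin (L s)) has_derivative (\<lambda>h. h * ((\<Sum>c\<in>Basis. M c \<bullet> c) * det_lin (L t)))) (at t within X)"
proof -
  have "((\<lambda>s. det_lin (L s)) has_derivative
     (\<lambda>h. \<Sum>p | p permutes (Basis::'a set). of_int (sign p) *
            (\<Sum>c\<in>Basis. h * (M (L t (p c)) \<bullet> c) * (\<Prod>b\<in>Basis-{c}. L t (p b) \<bullet> b)))) (at t within X)"
    unfolding det_lin_def
    by (intro has_derivative_sum has_derivative_mult_right has_derivative_prod e)
  moreover have "(\<lambda>h. \<Sum>p | p permutes (Basis::'a set). of_int (sign p) *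
            (\<Sum>c\<in>Basis. h * (M (L t (p c)) \<bullet> c) * (\<Prod>b\<in>Basis-{c}. L t (p b) \<bullet> b)))
     = (\<lambda>h. h * ((\<Sum>c\<in>Basis. M c \<bullet> c) * det_lin (L t)))"
  proof
    fix h :: real
    have "(\<Sum>p | p permutes (Basis::'a set). of_int (sign p) *
            (\<Sum>c\<in>Basis. h * (M (L t (p c)) \<bullet> c) * (\<Prod>b\<in>Basis-{c}. L t (p b) \<bullet> b)))
        = h * (\<Sum>p | p permutes (Basis::'a set). of_int (sign p) *
            (\<Sum>c\<in>Basis. (M (L t (p c)) \<bullet> c) * (\<Prod>b\<in>Basis-{c}. L t (p b) \<bullet> b)))"
      by (simp add: sum_distrib_left mult_ac)
    also have "\<dots> = h * ((\<Sum>c\<in>Basis. M c \<bullet> c) * det_lin (L t))"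
      by (simp only: jacobi[OF M])
    finally show "(\<Sum>p | p permutes (Basis::'a set). of_int (sign p) *
            (\<Sum>c\<in>Basis. h * (M (L t (p c)) \<bullet> c) * (\<Prod>b\<in>Basis-{c}. L t (p b) \<bullet> b)))
        = h * ((\<Sum>c\<in>Basis. M c \<bullet> c) * det_lin (L t))" .
  qed
  ultimately show ?thesis by simp
qed

lemma liouville:
  fixes \<phi> :: "real \<Rightarrow> 'a::euclidean_space \<Rightarrow> 'a" and F :: "real \<Rightarrow> 'a \<Rightarrow> 'a"
  assumes Fd: "\<And>t y. F t differentiable (at y)"
  and Fdiv: "\<And>t y. divergence (F t) y = 0"
  and T: "is_interval T" "open T" "t0 \<in> T" and W: "open W"
  and sm: "smooth_on (T \<times> W) (\<lambda>(t, z). \<phi> t z)"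
  and init: "\<forall>z\<in>W. \<phi> t0 z = z"
  and flow: "\<forall>t\<in>T. \<forall>z\<in>W. ((\<lambda>s. \<phi> s z) has_vector_derivative F t (\<phi> t z)) (at t)"
  shows "\<forall>t\<in>T. \<forall>z\<in>W. det_lin (frechet_derivative (\<phi> t) (at z)) = 1"
proof (intro ballI)
  fix t z assume t: "t \<in> T" and z: "z \<in> W"
  define \<Phi> where "\<Phi> = (\<lambda>(t, z). \<phi> t z)"
  have smP: "smooth_on (T \<times> W) \<Phi>" using sm by (simp add: \<Phi>_def)
  have S: "open (T \<times> W)" using T W by (simp add: open_Times)
  have DP: "(\<Phi> has_derivative frechet_derivative \<Phi> (at x)) (at x)" if "x \<in> T \<times> W" for x
    using smooth_D[OF smP that, of "[]"] by simp
  have pz: "(\<phi> s has_derivative (\<lambda>a. dderiv [(0, a)] \<Phi> (s, y))) (at y)" if "s \<in> T" "y \<in> W" for s y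
  proof -
    have "((\<lambda>y. (s, y)) has_derivative (\<lambda>a. (0, a))) (at y)"
      by (auto intro!: derivative_eq_intros)
    from has_derivative_compose[OF this DP] that
    show ?thesis by (simp add: o_def \<Phi>_def)
  qed
  have pt: "((\<lambda>s. \<phi> s y) has_derivative (\<lambda>h. frechet_derivative \<Phi> (at (s, y)) (h, 0))) (at s)" if "s \<in> T" "y \<in> W" for s y
  proof -
    have "((\<lambda>s. (s, y)) has_derivative (\<lambda>h. (h, 0))) (at s)"
      by (auto intro!: derivative_eq_intros)
    from has_derivative_compose[OF this DP] that
    show ?thesis by (simp add: o_def \<Phi>_def)
  qed
  have eqF: "dderiv [(1, 0)] \<Phi> (s, y) = F s (\<phi> s y)" if "s \<in> T" "y \<in> W" for s y
  proof -
    have "((\<lambda>s. \<phi> s y) has_derivative (\<lambda>h. h *\<^sub>R F s (\<phi> s y))) (at s)"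
      using flow that by (simp add: has_vector_derivative_def)
    from has_derivative_unique[OF pt[OF that] this]
    have "frechet_derivative \<Phi> (at (s, y)) (1, 0) = F s (\<phi> s y)" by (metis scaleR_one)
    then show ?thesis by simp
  qed
  define Lh where "Lh s = (\<lambda>a. dderiv [(0, a)] \<Phi> (s, z))" for s
  have Lh: "frechet_derivative (\<phi> s) (at z) = Lh s" if "s \<in> T" for s
    using frechet_derivative_at[OF pz[OF that z]] by (simp add: Lh_def)
  have lin: "linear (frechet_derivative (F s) (at y))" for s y
    using Fd frechet_derivative_works has_derivative_linear by blast
  have deriv0: "((\<lambda>s. det_lin (Lh s)) has_derivative (\<lambda>h. h * 0)) (at s within T)" if s: "s \<in> T" for s
  proof -
    define M where "M = frechet_derivative (F s) (at (\<phi> s z))"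
    have e: "((\<lambda>r. Lh r a \<bullet> b) has_derivative (\<lambda>h. h * (M (Lh s a) \<bullet> b))) (at s within T)" for a b
    proof -
      have sz: "(s, z) \<in> T \<times> W" using s z by simp
      define D2 where "D2 = frechet_derivative (dderiv [(0, a)] \<Phi>) (at (s, z))"
      have "((\<lambda>r. (r, z)) has_derivative (\<lambda>h. (h, 0))) (at s)"
        by (auto intro!: derivative_eq_intros)
      from has_derivative_compose[OF this smooth_D[OF smP sz, of "[(0, a)]"]]
      have d1: "((\<lambda>r. dderiv [(0, a)] \<Phi> (r, z)) has_derivative (\<lambda>h. D2 (h, 0))) (at s)"
        by (simp add: o_def D2_def)
      have linD2: "linear D2" unfolding D2_def
        using smooth_D[OF smP sz, of "[(0, a)]"] has_derivative_linear by blast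
      have "D2 (h, 0) = h *\<^sub>R D2 (1, 0)" for h
        using linear_cmul[OF linD2, of h "(1, 0)"] by simp
      moreover have "D2 (1, 0) = dderiv [(1, 0), (0, a)] \<Phi> (s, z)" by (simp add: D2_def)
      moreover have "\<dots> = dderiv [(0, a), (1, 0)] \<Phi> (s, z)" by (rule sym_smooth[OF smP sz])
      moreover have "dderiv [(0, a), (1, 0)] \<Phi> (s, z) = M (Lh s a)"
      proof -
        define D3 where "D3 = frechet_derivative (dderiv [(1, 0)] \<Phi>) (at (s, z))"
        have "((\<lambda>y. (s, y)) has_derivative (\<lambda>a. (0, a))) (at z)"
          by (auto intro!: derivative_eq_intros)
        from has_derivative_compose[OF this smooth_D[OF smP sz, of "[(1, 0)]"]]
        have d3: "((\<lambda>y. dderiv [(1, 0)] \<Phi> (s, y)) has_derivative (\<lambda>a. D3 (0, a))) (at z)"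
          by (simp add: o_def D3_def)
        have "((\<lambda>y. F s (\<phi> s y)) has_derivative (\<lambda>a. D3 (0, a))) (at z)"
          by (rule has_derivative_transform_within_open[OF d3 W z]) (use eqF[OF s] in simp)
        moreover have "((\<lambda>y. F s (\<phi> s y)) has_derivative (\<lambda>a. M (Lh s a))) (at z)"
        proof -
          have "(F s has_derivative M) (at (\<phi> s z))"
            unfolding M_def using Fd frechet_derivative_works by blast
          from has_derivative_compose[OF pz[OF s z] this]
          show ?thesis by (simp add: o_def Lh_def)
        qed
        ultimately have "(\<lambda>a. D3 (0, a)) = (\<lambda>a. M (Lh s a))" by (rule has_derivative_unique)
        then show ?thesis by (simp add: D3_def fun_eq_iff)
      qed
      ultimately have "(\<lambda>h. D2 (h, 0)) = (\<lambda>h. h *\<^sub>R M (Lh s a))" by simp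
      with d1 have "((\<lambda>r. Lh r a) has_derivative (\<lambda>h. h *\<^sub>R M (Lh s a))) (at s)"
        by (simp add: Lh_def)
      from has_derivative_at_withinI[OF inner_deriv[OF this, of b]]
      show ?thesis by simp
    qed
    have linM: "linear M" unfolding M_def by (rule lin)
    from det_lin_deriv[where L=Lh and M=M and t=s and X=T, OF linM e]
    have "((\<lambda>r. det_lin (Lh r)) has_derivative (\<lambda>h. h * ((\<Sum>c\<in>Basis. M c \<bullet> c) * det_lin (Lh s)))) (at s within T)"
      .
    moreover have "(\<Sum>c\<in>Basis. M c \<bullet> c) = 0"
      using Fdiv[of s "\<phi> s z"] by (simp add: divergence_def M_def)
    ultimately show ?thesis by simp
  qed
  have "\<exists>c. \<forall>x\<in>T. det_lin (Lh x) = c"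
  proof (rule has_field_derivative_zero_constant)
    show "convex T" using T(1) by (rule is_interval_convex)
    fix x assume "x \<in> T"
    from deriv0[OF this] show "((\<lambda>s. det_lin (Lh s)) has_field_derivative 0) (at x within T)"
      by (simp add: has_field_derivative_def mult_zero_left[abs_def])
  qed
  then obtain c where c: "\<forall>x\<in>T. det_lin (Lh x) = c" by blast
  have "(\<phi> t0 has_derivative (\<lambda>x. x)) (at z)"
    by (rule has_derivative_transform_within_open[OF has_derivative_ident W z]) (use init in simp)
  then have "frechet_derivative (\<phi> t0) (at z) = (\<lambda>x. x)" by (rule frechet_derivative_at[symmetric])
  then have "Lh t0 = (\<lambda>x. x)" using Lh[OF T(3)] by simp
  then have "c = 1" using c T(3) det_lin_id by metis
  then show "det_lin (frechet_derivative (\<phi> t) (at z)) = 1" using c t Lh[OF t] by simp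
qed

theorem mainTheorem1:
  fixes H :: "'n::finite \<Rightarrow> (real ^ 3) \<times> (real ^ 3) \<Rightarrow> real"
    and tau :: "'n \<Rightarrow> real \<Rightarrow> real"
  assumes H_smooth: "\<And>I. smooth_on UNIV (H I)"
    and tau_smooth: "\<And>I. smooth_on UNIV (tau I)"
  shows "(\<forall>t z. divergence (hamiltonian_field H tau t) z = 0)
    \<and> (\<forall>(\<phi> :: real \<Rightarrow> ((real ^ 3) \<times> (real ^ 3)) ^ 'n \<Rightarrow> ((real ^ 3) \<times> (real ^ 3)) ^ 'n) T W t0.
         is_interval T \<and> open T \<and> t0 \<in> T \<and> open W
         \<and> smooth_on (T \<times> W) (\<lambda>(t, z). \<phi> t z)
         \<and> (\<forall>z\<in>W. \<phi> t0 z = z)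
         \<and> (\<forall>t\<in>T. \<forall>z\<in>W. ((\<lambda>s. \<phi> s z) has_vector_derivative
                               hamiltonian_field H tau t (\<phi> t z)) (at t))
         \<longrightarrow> (\<forall>t\<in>T. \<forall>z\<in>W. det_lin (frechet_derivative (\<phi> t) (at z)) = 1))"
proof (rule conjI)
  show "\<forall>t z. divergence (hamiltonian_field H tau t) z = 0"
    using divergence_zero[where H=H, OF H_smooth] by blast
next
  show "\<forall>(\<phi> :: real \<Rightarrow> ((real ^ 3) \<times> (real ^ 3)) ^ 'n \<Rightarrow> ((real ^ 3) \<times> (real ^ 3)) ^ 'n) T W t0.
         is_interval T \<and> open T \<and> t0 \<in> T \<and> open W
         \<and> smooth_on (T \<times> W) (\<lambda>(t, z). \<phi> t z)
         \<and> (\<forall>z\<in>W. \<phi> t0 z = z)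
         \<and> (\<forall>t\<in>T. \<forall>z\<in>W. ((\<lambda>s. \<phi> s z) has_vector_derivative
                               hamiltonian_field H tau t (\<phi> t z)) (at t))
         \<longrightarrow> (\<forall>t\<in>T. \<forall>z\<in>W. det_lin (frechet_derivative (\<phi> t) (at z)) = 1)"
  proof (intro allI impI)
    fix \<phi> :: "real \<Rightarrow> ((real ^ 3) \<times> (real ^ 3)) ^ 'n \<Rightarrow> ((real ^ 3) \<times> (real ^ 3)) ^ 'n" and T W t0
    assume A: "is_interval T \<and> open T \<and> t0 \<in> T \<and> open W
         \<and> smooth_on (T \<times> W) (\<lambda>(t, z). \<phi> t z)
         \<and> (\<forall>z\<in>W. \<phi> t0 z = z)
         \<and> (\<forall>t\<in>T. \<forall>z\<in>W. ((\<lambda>s. \<phi> s z) has_vector_derivative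
                               hamiltonian_field H tau t (\<phi> t z)) (at t))"
    show "\<forall>t\<in>T. \<forall>z\<in>W. det_lin (frechet_derivative (\<phi> t) (at z)) = 1"
      by (rule liouville[where F="hamiltonian_field H tau"])
         (use A ham_differentiable[where H=H, OF H_smooth] divergence_zero[where H=H, OF H_smooth] in auto)
  qed
qed

end
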